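(* Define real sequences $(x_n)$, $(y_n)$ by, for $n\ge 0$: $x_{4n+1}=0$, $x_{4n+2}=3^{-(n+1)}$, $x_{4n+3}=2\cdot3^{-(n+1)}$, $x_{4n+4}=9\cdot 3^{-(n+1)}$, and $y_{4n+1}=6^{-(n+1)}$, $y_{4n+2}=y_{4n+3}=y_{4n+4}=-6^{-(n+1)}$. Let $E=E(x_n,y_n)\subset\mathbb R^2$. Then: (a) $E_0=S(\{0,1,2,9\},(3^{-n})_n)$; (b) $E$ has empty interior in $\mathbb R^2$; (c) for every $t\in(0,\tfrac98)$ and every $\varepsilon>0$, the open ball $B((t,0),\varepsilon)$ contains a point $p$ such that $\{p\}$ is a connected component of $E$.
   Context: For an absolutely convergent series $\sum_n v_n$ in $\mathbb R^2$, its achievement set is $E(v_n)=\{\sum_{n=1}^\infty \varepsilon_n v_n : (\varepsilon_n)\in\{0,1\}^{\mathbb N}\}$; $E(x_n,y_n)$ denotes the achievement set of $((x_n,y_n))_n$. For $A\subset\mathbb R^2$, $A_0=\{s\in\mathbb R:(s,0)\in A\}$. For a finite $P\subset\mathbb R$ and a sequence $(a_n)$, $S(P,a)=\{\sum_{n=1}^\infty \varepsilon_n a_n : (\varepsilon_n)\in P^{\mathbb N}\}$. *)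

theory Defs
  imports "HOL-Analysis.Analysis"
begin

text \<open>Sequences are indexed from 1 as in the paper: the value at index 0 is never used.\<close>

definition achievement_set :: "(nat \<Rightarrow> 'a::real_normed_vector) \<Rightarrow> 'a set" where
  "achievement_set v = {(\<Sum>n. (if \<epsilon> n then v (Suc n) else 0)) | \<epsilon> :: nat \<Rightarrow> bool. True}"

definition section0 :: "(real \<times> real) set \<Rightarrow> real set" where
  "section0 A = {s. (s, 0) \<in> A}"

definition S_set :: "real set \<Rightarrow> (nat \<Rightarrow> real) \<Rightarrow> real set" where
  "S_set P a = {(\<Sum>n. e n * a (Suc n)) | e. \<forall>n. e n \<in> P}"

definition xseq :: "nat \<Rightarrow> real" where
  "xseq k = (let n = (k - 1) div 4; r = (k - 1) mod 4 in
     if r = 0 then 0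
     else if r = 1 then (1/3) ^ (n + 1)
     else if r = 2 then 2 * (1/3) ^ (n + 1)
     else 9 * (1/3) ^ (n + 1))"

definition yseq :: "nat \<Rightarrow> real" where
  "yseq k = (let n = (k - 1) div 4; r = (k - 1) mod 4 in
     if r = 0 then (1/6) ^ (n + 1) else - ((1/6) ^ (n + 1)))"

end

theory Submission imports Defs begin

lemma sums_pair: "f sums a \<Longrightarrow> g sums b \<Longrightarrow> (\<lambda>n. (f n, g n)) sums (a, b)"
  unfolding sums_def
proof -
  assume "(\<lambda>n. \<Sum>i<n. f i) \<longlonglongrightarrow> a" "(\<lambda>n. \<Sum>i<n. g i) \<longlonglongrightarrow> b"
  then have "(\<lambda>n. (\<Sum>i<n. f i, \<Sum>i<n. g i)) \<longlonglongrightarrow> (a, b)" by (rule tendsto_Pair)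
  moreover have "(\<lambda>n. \<Sum>i<n. (f i, g i)) = (\<lambda>n. (\<Sum>i<n. f i, \<Sum>i<n. g i))"
    by (auto simp: prod_eq_iff fst_sum snd_sum)
  ultimately show "(\<lambda>n. \<Sum>i<n. (f i, g i)) \<longlonglongrightarrow> (a, b)" by simp
qed

lemma dm4[simp]: "Suc (4*n) div 4 = n" "Suc (4*n) mod 4 = 1" "Suc (Suc (4*n)) div 4 = n"
  "Suc (Suc (4*n)) mod 4 = 2" "Suc (Suc (Suc (4*n))) div 4 = n" "Suc (Suc (Suc (4*n))) mod 4 = 3"
  by presburger+

lemma xseq_blk:
  "xseq (Suc (4*n)) = 0" "xseq (Suc (4*n+1)) = (1/3)^Suc n"
  "xseq (Suc (4*n+2)) = 2*(1/3)^Suc n" "xseq (Suc (4*n+3)) = 9*(1/3)^Suc n"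
  by (simp_all add: xseq_def)

lemma yseq_blk:
  "yseq (Suc (4*n)) = (1/6)^Suc n" "yseq (Suc (4*n+1)) = -((1/6)^Suc n)"
  "yseq (Suc (4*n+2)) = -((1/6)^Suc n)" "yseq (Suc (4*n+3)) = -((1/6)^Suc n)"
  by (simp_all add: yseq_def)

lemma pow_bound: "(1/3::real)^(k div 4) \<le> 2 * (4/5)^k"
proof -
  have a: "(1/3::real)^(k div 4) \<le> ((4/5)^4)^(k div 4)"
    by (rule power_mono) (auto simp: power_numeral_reduce)
  have b: "((4/5::real)^4)^(k div 4) = (4/5)^(4*(k div 4))" by (simp add: power_mult)
  have c: "(4/5::real)^(4*(k div 4)) * (4/5)^(k mod 4) = (4/5)^k"
    by (metis power_add div_mult_mod_eq mult.commute)
  have d: "(4/5::real)^(k mod 4) \<ge> (4/5)^3"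
    by (rule power_decreasing) auto
  have e: "(4/5::real)^3 = 64/125" by (simp add: power3_eq_cube)
  have f: "(4/5::real)^(4*(k div 4)) \<ge> 0" by simp
  have "(4/5::real)^(4*(k div 4)) * (64/125) \<le> (4/5)^(4*(k div 4)) * (4/5)^(k mod 4)"
    using d e f by (metis mult_left_mono)
  then show ?thesis using a b c f by linarith
qed

lemma xseq_bound: "\<bar>xseq (Suc k)\<bar> \<le> 6 * (4/5)^k"
proof -
  have "\<bar>xseq (Suc k)\<bar> \<le> 9 * (1/3)^Suc (k div 4)"
    by (auto simp: xseq_def Let_def)
  also have "\<dots> = 3 * (1/3)^(k div 4)" by simp
  also have "\<dots> \<le> 6 * (4/5)^k" using pow_bound[of k] by simp
  finally show ?thesis .
qed

lemma yseq_bound: "\<bar>yseq (Suc k)\<bar> \<le> 6 * (4/5)^k"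
proof -
  have "\<bar>yseq (Suc k)\<bar> \<le> (1/3)^(k div 4)"
  proof -
    have "\<bar>yseq (Suc k)\<bar> = (1/6)^Suc (k div 4)" by (auto simp: yseq_def Let_def)
    also have "\<dots> \<le> (1/6)^(k div 4)" by (rule power_decreasing) auto
    also have "\<dots> \<le> (1/3)^(k div 4)" by (rule power_mono) auto
    finally show ?thesis .
  qed
  also have "\<dots> \<le> 6 * (4/5)^k" using pow_bound[of k] zero_le_power[of "4/5::real" k] by linarith
  finally show ?thesis .
qed

definition A :: "(nat \<Rightarrow> bool) \<Rightarrow> nat \<Rightarrow> int" where
  "A e n = (if e (4*n+1) then 1 else 0) + (if e (4*n+2) then 2 else 0) + (if e (4*n+3) then 9 else 0)"
definition B :: "(nat \<Rightarrow> bool) \<Rightarrow> nat \<Rightarrow> int" where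
  "B e n = (if e (4*n) then 1 else 0) - (if e (4*n+1) then 1 else 0) - (if e (4*n+2) then 1 else 0)
     - (if e (4*n+3) then 1 else 0)"
definition X :: "(nat \<Rightarrow> bool) \<Rightarrow> real" where
  "X e = (\<Sum>n. of_int (A e n) * (1/3)^Suc n)"
definition Y :: "(nat \<Rightarrow> bool) \<Rightarrow> real" where
  "Y e = (\<Sum>n. of_int (B e n) * (1/6)^Suc n)"

lemma sum4: fixes n :: nat shows "sum h {n*4..<n*4+4} = h (4*n) + h (4*n+1) + h (4*n+2) + h (4*n+3)"
proof -
  have "{n*4..<n*4+4} = {4*n, 4*n+1, 4*n+2, 4*n+3}" by auto
  then show ?thesis by (simp add: algebra_simps)
qed

lemma xseq_gen: "xseq (Suc k) = (if k mod 4 = 0 then 0 else if k mod 4 = 1 then (1/3)^Suc (k div 4)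
   else if k mod 4 = 2 then 2*(1/3)^Suc (k div 4) else 9*(1/3)^Suc (k div 4))"
  by (simp add: xseq_def Let_def)
lemma yseq_gen: "yseq (Suc k) = (if k mod 4 = 0 then (1/6)^Suc (k div 4) else -((1/6)^Suc (k div 4)))"
  by (simp add: yseq_def Let_def)

lemma geo_summ: "summable (\<lambda>k. 6 * (4/5::real)^k)"
  by (intro summable_mult summable_geometric) auto

lemma sums_X: "(\<lambda>k. if e k then xseq (Suc k) else 0) sums X e"
proof -
  let ?f = "\<lambda>k. if e k then xseq (Suc k) else 0"
  have sf: "summable ?f"
    by (rule summable_comparison_test'[OF geo_summ, of 0]) (use xseq_bound in auto)
  have "(\<lambda>n. sum ?f {n*4..<n*4+4}) sums suminf ?f" by (rule sums_group[OF summable_sums[OF sf]]) simp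
  moreover have "(\<lambda>n. sum ?f {n*4..<n*4+4}) = (\<lambda>n. of_int (A e n) * (1/3)^Suc n)"
    by (rule ext, unfold sum4) (simp only: xseq_gen, simp add: A_def)
  ultimately have "suminf ?f = X e" unfolding X_def by (simp add: sums_unique)
  then show ?thesis using sf by (metis summable_sums)
qed

lemma sums_Y: "(\<lambda>k. if e k then yseq (Suc k) else 0) sums Y e"
proof -
  let ?f = "\<lambda>k. if e k then yseq (Suc k) else 0"
  have sf: "summable ?f"
    by (rule summable_comparison_test'[OF geo_summ, of 0]) (use yseq_bound in auto)
  have "(\<lambda>n. sum ?f {n*4..<n*4+4}) sums suminf ?f" by (rule sums_group[OF summable_sums[OF sf]]) simp
  moreover have "(\<lambda>n. sum ?f {n*4..<n*4+4}) = (\<lambda>n. of_int (B e n) * (1/6)^Suc n)"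
    by (rule ext, unfold sum4) (simp only: yseq_gen, simp add: B_def)
  ultimately have "suminf ?f = Y e" unfolding Y_def by (simp add: sums_unique)
  then show ?thesis using sf by (metis summable_sums)
qed

lemma rep: "(\<Sum>k. if e k then (xseq (Suc k), yseq (Suc k)) else 0) = (X e, Y e)"
proof -
  have "(\<lambda>k. if e k then (xseq (Suc k), yseq (Suc k)) else 0)
      = (\<lambda>k. (if e k then xseq (Suc k) else 0, if e k then yseq (Suc k) else 0))"
    by (auto simp: zero_prod_def)
  then show ?thesis using sums_pair[OF sums_X sums_Y] by (simp add: sums_unique[symmetric])
qed

lemma E_eq: "achievement_set (\<lambda>k. (xseq k, yseq k)) = {(X e, Y e) | e. True}"
  unfolding achievement_set_def using rep by auto

definition dg :: "(nat \<Rightarrow> int) \<Rightarrow> bool" where "dg d \<longleftrightarrow> (\<forall>n. -3 \<le> d n \<and> d n \<le> 1)"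
definition val :: "(nat \<Rightarrow> int) \<Rightarrow> real" where "val d = (\<Sum>n. of_int (d n) * (1/6)^Suc n)"
definition NV :: "real \<Rightarrow> bool" where "NV z \<longleftrightarrow> (\<forall>m::int. \<forall>d. dg d \<longrightarrow> z + of_int m \<noteq> val d)"

lemma dg_bnd: assumes "dg d" shows "-3 \<le> real_of_int (d n)" "real_of_int (d n) \<le> 1"
proof -
  have "-3 \<le> d n" "d n \<le> 1" using assms by (auto simp: dg_def)
  then show "-3 \<le> real_of_int (d n)" "real_of_int (d n) \<le> 1" by linarith+
qed

lemma geo6: "(\<lambda>n. c * (1/6::real)^Suc n) sums (c/5)"
proof -
  have "(\<lambda>n. (1/6::real)^n) sums (1/(1 - 1/6))" by (rule geometric_sums) simp
  then have "(\<lambda>n. (c/6) * (1/6::real)^n) sums ((c/6) * (1/(1 - 1/6)))" by (rule sums_mult)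
  then show ?thesis by simp
qed

lemma val_sums: assumes "dg d" shows "(\<lambda>n. of_int (d n) * (1/6::real)^Suc n) sums val d"
proof -
  have "summable (\<lambda>n. of_int (d n) * (1/6::real)^Suc n)"
  proof (rule summable_comparison_test'[OF sums_summable[OF geo6[of 3]], of 0])
    fix n show "norm (of_int (d n) * (1/6::real)^Suc n) \<le> 3 * (1/6)^Suc n"
    proof -
      have "\<bar>real_of_int (d n)\<bar> \<le> 3" using dg_bnd[OF assms, of n] by linarith
      then have "\<bar>real_of_int (d n)\<bar> * (1/6)^Suc n \<le> 3 * (1/6::real)^Suc n"
        by (intro mult_right_mono) auto
      then show ?thesis by (simp add: abs_mult)
    qed
  qed
  then show ?thesis unfolding val_def by (rule summable_sums)
qed

lemma val_bounds: assumes "dg d" shows "-3/5 \<le> val d" "val d \<le> 1/5"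
proof -
  have l: "-3*(1/6)^Suc n \<le> of_int (d n) * (1/6::real)^Suc n" for n
    by (rule mult_right_mono[OF dg_bnd(1)[OF assms]]) simp
  have u: "of_int (d n) * (1/6::real)^Suc n \<le> 1 * (1/6)^Suc n" for n
    by (rule mult_right_mono[OF dg_bnd(2)[OF assms]]) simp
  show "-3/5 \<le> val d"
    using sums_le[OF _ geo6[of "-3"] val_sums[OF assms]] l by simp
  show "val d \<le> 1/5"
    using sums_le[OF _ val_sums[OF assms] geo6[of 1]] u by simp
qed

lemma dg_tail: "dg d \<Longrightarrow> dg (\<lambda>n. d (Suc n))" by (simp add: dg_def)

lemma val_shift: assumes "dg d" shows "val d = (of_int (d 0) + val (\<lambda>n. d (Suc n))) / 6"
proof -
  have "(\<lambda>n. (1/6) * (of_int (d (Suc n)) * (1/6::real)^Suc n)) sums ((1/6) * val (\<lambda>n. d (Suc n)))"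
    by (rule sums_mult[OF val_sums[OF dg_tail[OF assms]]])
  then have "(\<lambda>n. of_int (d (Suc n)) * (1/6::real)^Suc (Suc n)) sums ((1/6) * val (\<lambda>n. d (Suc n)))"
    by (simp add: algebra_simps)
  then have "(\<lambda>n. of_int (d n) * (1/6::real)^Suc n) sums ((1/6) * val (\<lambda>n. d (Suc n)) + of_int (d 0) * (1/6))"
    by (subst (asm) sums_Suc_iff[where f = "\<lambda>n. of_int (d n) * (1/6::real)^Suc n"]) simp
  then have "val d = (1/6) * val (\<lambda>n. d (Suc n)) + of_int (d 0) * (1/6)"
    using val_sums[OF assms] sums_unique2 by blast
  then show ?thesis by simp
qed

lemma val_inj: "dg d \<Longrightarrow> dg d' \<Longrightarrow> val d = val d' \<Longrightarrow> d n = d' n"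
proof (induction n arbitrary: d d')
  case 0
  have h: "of_int (d 0 - d' 0) = val (\<lambda>n. d' (Suc n)) - val (\<lambda>n. d (Suc n))"
    using val_shift[OF 0(1)] val_shift[OF 0(2)] 0(3) by simp
  have "\<bar>of_int (d 0 - d' 0)\<bar> < (1::real)"
    unfolding h using val_bounds[OF dg_tail[OF 0(1)]] val_bounds[OF dg_tail[OF 0(2)]] by linarith
  then have "\<bar>d 0 - d' 0\<bar> < 1" by linarith
  then show ?case by simp
next
  case (Suc n)
  have h: "of_int (d 0 - d' 0) = val (\<lambda>n. d' (Suc n)) - val (\<lambda>n. d (Suc n))"
    using val_shift[OF Suc(2)] val_shift[OF Suc(3)] Suc(4) by simp
  have "\<bar>of_int (d 0 - d' 0)\<bar> < (1::real)"
    unfolding h using val_bounds[OF dg_tail[OF Suc(2)]] val_bounds[OF dg_tail[OF Suc(3)]] by linarith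
  then have "\<bar>d 0 - d' 0\<bar> < 1" by linarith
  then have "d 0 = d' 0" by simp
  then have "val (\<lambda>n. d (Suc n)) = val (\<lambda>n. d' (Suc n))" using h by simp
  from Suc(1)[OF dg_tail[OF Suc(2)] dg_tail[OF Suc(3)] this] show ?case .
qed

lemma gap_k: "dg d \<Longrightarrow> \<exists>z. \<bar>z - val d\<bar> \<le> (9/10) * (1/6)^k \<and> NV z"
proof (induction k arbitrary: d)
  case 0
  have "NV (3/10)"
    unfolding NV_def
  proof (intro allI impI)
    fix m :: int and d' assume "dg d'"
    show "3/10 + of_int m \<noteq> val d'"
    proof
      assume e: "3/10 + of_int m = val d'"
      have "of_int m \<le> (-1/10::real)" using val_bounds(2)[OF \<open>dg d'\<close>] e by linarith
      moreover have "of_int m \<ge> (-9/10::real)" using val_bounds(1)[OF \<open>dg d'\<close>] e by linarith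
      ultimately have "m \<le> -1" "m \<ge> 0" by linarith+
      then show False by simp
    qed
  qed
  moreover have "\<bar>3/10 - val d\<bar> \<le> 9/10" using val_bounds[OF 0(1)] by (simp add: abs_le_iff)
  ultimately show ?case by auto
next
  case (Suc k)
  obtain z' where z': "\<bar>z' - val (\<lambda>n. d (Suc n))\<bar> \<le> (9/10) * (1/6)^k" "NV z'"
    using Suc(1)[OF dg_tail[OF Suc(2)]] by blast
  define z where "z = (of_int (d 0) + z') / 6"
  have "z - val d = (z' - val (\<lambda>n. d (Suc n))) / 6"
    unfolding z_def val_shift[OF Suc(2)] by (simp add: field_simps)
  then have "\<bar>z - val d\<bar> = \<bar>z' - val (\<lambda>n. d (Suc n))\<bar> / 6"
    by (metis abs_divide abs_numeral)
  also have "\<dots> \<le> (9/10) * (1/6)^Suc k" using z'(1) by simp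
  finally have 1: "\<bar>z - val d\<bar> \<le> (9/10) * (1/6)^Suc k" .
  have "NV z" unfolding NV_def
  proof (intro allI impI notI)
    fix m :: int and d' assume d': "dg d'" and e: "z + of_int m = val d'"
    then have "z' + of_int (d 0 + 6*m - d' 0) = val (\<lambda>n. d' (Suc n))"
      unfolding z_def val_shift[OF d'] by (simp add: field_simps)
    then show False using z'(2) dg_tail[OF d'] unfolding NV_def by blast
  qed
  with 1 show ?case by blast
qed

lemma gap: assumes "dg d" "r > 0" shows "\<exists>z. \<bar>z - val d\<bar> < r \<and> (\<forall>d'. dg d' \<longrightarrow> z \<noteq> val d')"
proof -
  obtain k where k: "(1/6::real)^k < r" using real_arch_pow_inv[OF assms(2), of "1/6"] by auto
  obtain z where z: "\<bar>z - val d\<bar> \<le> (9/10) * (1/6)^k" "NV z" using gap_k[OF assms(1)] by blast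
  have "(1/6::real)^k \<ge> 0" by simp
  then have "(9/10) * (1/6::real)^k < r" using k by linarith
  moreover have "\<forall>d'. dg d' \<longrightarrow> z \<noteq> val d'" using z(2) unfolding NV_def by (metis add.right_neutral of_int_0)
  ultimately show ?thesis using z(1) by force
qed

lemma conn_vals: assumes "connected S" "S \<subseteq> {val d | d. dg d}" "a \<in> S" "b \<in> S" shows "a = b"
proof (rule ccontr)
  assume "a \<noteq> b"
  define lo where "lo = min a b" define hi where "hi = max a b"
  have lohi: "lo < hi" "lo \<in> S" "hi \<in> S" using \<open>a \<noteq> b\<close> assms(3,4) by (auto simp: lo_def hi_def min_def max_def)
  have Icc: "\<And>x. lo \<le> x \<Longrightarrow> x \<le> hi \<Longrightarrow> x \<in> S" using assms(1) lohi unfolding connected_iff_interval by blast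
  have "(lo+hi)/2 \<in> S" using Icc lohi by auto
  then obtain d where d: "dg d" "(lo+hi)/2 = val d" using assms(2) by blast
  obtain z where z: "\<bar>z - val d\<bar> < (hi - lo)/2" "\<forall>d'. dg d' \<longrightarrow> z \<noteq> val d'"
    using gap[OF d(1), of "(hi-lo)/2"] lohi by auto
  have c1: "z - val d < (hi-lo)/2" and c2: "- (z - val d) < (hi-lo)/2" using z(1) abs_less_iff by blast+
  have l: "lo \<le> z" using c1 c2 d(2) by (simp add: field_simps)
  have h: "z \<le> hi" using c1 c2 d(2) by (simp add: field_simps)
  have "z \<in> S" using l h by (rule Icc)
  then show False using assms(2) z(2) by blast
qed


definition mk :: "(nat \<Rightarrow> bool) \<Rightarrow> (nat \<Rightarrow> real) \<Rightarrow> nat \<Rightarrow> bool" where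
 "mk t g k = (if t (k div 4) then k mod 4 = 0 else
    (if k mod 4 = 0 then g (k div 4) \<noteq> 0 else if k mod 4 = 1 then g (k div 4) = 1
     else if k mod 4 = 2 then g (k div 4) = 2 else g (k div 4) = 9))"

lemma dm4b[simp]: "(4*n) div 4 = n" "(4*n) mod 4 = 0" "(4*n+1) div 4 = n" "(4*n+1) mod 4 = 1"
  "(4*n+2) div 4 = n" "(4*n+2) mod 4 = 2" "(4*n+3) div 4 = n" "(4*n+3) mod 4 = 3"
  for n :: nat by presburger+

lemma mk_vals: "mk t g (4*n) = (t n \<or> g n \<noteq> 0)" "mk t g (4*n+1) = (\<not> t n \<and> g n = 1)"
  "mk t g (4*n+2) = (\<not> t n \<and> g n = 2)" "mk t g (4*n+3) = (\<not> t n \<and> g n = 9)"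
  by (simp_all add: mk_def)

lemma mk_A: assumes "g n \<in> {0,1,2,9}" shows "real_of_int (A (mk t g) n) = (if t n then 0 else g n)"
  using assms unfolding A_def mk_vals by auto

lemma mk_B: assumes "g n \<in> {0,1,2,9}" shows "B (mk t g) n = (if t n then 1 else 0)"
  using assms unfolding B_def mk_vals by auto

lemma dg_B: "dg (B e)" by (auto simp: dg_def B_def)
lemma Y_val: "Y e = val (B e)" by (simp add: Y_def val_def)
lemma B0_A: "B e n = 0 \<Longrightarrow> A e n \<in> {0,1,2,9}" by (auto simp: A_def B_def split: if_splits)
lemma B1_A: "B e n = 1 \<Longrightarrow> A e n = 0" by (auto simp: A_def B_def split: if_splits)
lemma A_rng: "A e n \<in> {0..12}" by (auto simp: A_def)

lemma val0: "val (\<lambda>_. 0) = 0" by (simp add: val_def)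
lemma dg0: "dg (\<lambda>_. 0)" by (simp add: dg_def)

lemma partA: "section0 (achievement_set (\<lambda>k. (xseq k, yseq k))) = S_set {0, 1, 2, 9} (\<lambda>n. (1/3) ^ n)"
proof (rule set_eqI, rule iffI)
  fix s assume "s \<in> section0 (achievement_set (\<lambda>k. (xseq k, yseq k)))"
  then obtain e where e: "s = X e" "0 = Y e" unfolding section0_def E_eq by auto
  have B0: "B e n = 0" for n
    using val_inj[OF dg_B dg0, of e n] e(2) val0 by (simp add: Y_val)
  have "\<forall>n. real_of_int (A e n) \<in> {0,1,2,9}"
    using B0_A[OF B0] by (auto simp del: of_int_numeral)
  then have "s = (\<Sum>n. real_of_int (A e n) * (\<lambda>n. (1/3::real)^n) (Suc n)) \<and> (\<forall>n. real_of_int (A e n) \<in> {0,1,2,9})"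
    using e(1) unfolding X_def by simp
  then show "s \<in> S_set {0, 1, 2, 9} (\<lambda>n. (1/3) ^ n)"
    unfolding S_set_def mem_Collect_eq by (intro exI[of _ "\<lambda>n. real_of_int (A e n)"]) simp
next
  fix s assume "s \<in> S_set {0, 1, 2, 9} (\<lambda>n. (1/3) ^ n)"
  then obtain c where c: "s = (\<Sum>n. c n * (1/3)^Suc n)" "\<forall>n. c n \<in> {0,1,2,9}"
    unfolding S_set_def by auto
  let ?e = "mk (\<lambda>_. False) c"
  have "X ?e = s" unfolding X_def c(1) using mk_A[of c _ "\<lambda>_. False"] c(2) by simp
  moreover have "Y ?e = 0" unfolding Y_def using mk_B[of c _ "\<lambda>_. False"] c(2) by simp
  ultimately show "s \<in> section0 (achievement_set (\<lambda>k. (xseq k, yseq k)))"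
    unfolding section0_def E_eq by (auto intro!: exI[of _ ?e])
qed

lemma partB: "interior (achievement_set (\<lambda>k. (xseq k, yseq k))) = {}"
proof (rule ccontr)
  let ?E = "achievement_set (\<lambda>k. (xseq k, yseq k))"
  assume "interior ?E \<noteq> {}"
  then obtain p where p: "p \<in> interior ?E" by blast
  then obtain r where r: "r > 0" "ball p r \<subseteq> ?E" using mem_interior by blast
  have "p \<in> ?E" using p interior_subset by blast
  then obtain e where pe: "p = (X e, Y e)" unfolding E_eq by auto
  obtain z where z: "\<bar>z - val (B e)\<bar> < r" "\<forall>d'. dg d' \<longrightarrow> z \<noteq> val d'" using gap[OF dg_B r(1)] by blast
  have "dist p (X e, z) = \<bar>z - Y e\<bar>" unfolding pe dist_Pair_Pair by (simp add: dist_real_def abs_minus_commute)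
  then have "(X e, z) \<in> ?E" using r(2) z(1) unfolding Y_val by auto
  then obtain e' where "z = Y e'" unfolding E_eq by auto
  then show False using z(2) dg_B Y_val by metis
qed

definition dig :: "real \<Rightarrow> real" where
  "dig x = (if 3 \<le> x then 9 else if 3*x \<le> 1 then 0 else if 3*x \<le> 2 then 1 else if 3*x \<le> 25/8 then 2 else 0)"
definition Jx :: "real \<Rightarrow> bool" where "Jx x \<longleftrightarrow> (0 \<le> x \<and> x \<le> 9/8) \<or> (3 \<le> x \<and> x \<le> 27/8)"
definition xs :: "real \<Rightarrow> nat \<Rightarrow> real" where "xs t n = ((\<lambda>x. 3*x - dig x) ^^ n) t"

lemma J_step: "Jx x \<Longrightarrow> Jx (3*x - dig x)" by (auto simp: dig_def Jx_def)
lemma dig_in: "dig x \<in> {0,1,2,9}" by (auto simp: dig_def)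
lemma xs_Suc: "xs t (Suc n) = 3 * xs t n - dig (xs t n)" by (simp add: xs_def)
lemma xs_J: "Jx t \<Longrightarrow> Jx (xs t n)" by (induction n) (auto simp: xs_Suc xs_def[of t 0] intro: J_step)
lemma xs_expand: "t = (\<Sum>i<k. dig (xs t i) * (1/3)^Suc i) + (1/3)^k * xs t k"
proof (induction k)
  case 0 then show ?case by (simp add: xs_def)
next
  case (Suc k)
  have "(1/3::real)^Suc k * xs t (Suc k) = (1/3)^k * xs t k - dig (xs t k) * (1/3)^Suc k"
    by (simp add: xs_Suc algebra_simps)
  moreover have "(\<Sum>i<Suc k. dig (xs t i) * (1/3::real)^Suc i) = (\<Sum>i<k. dig (xs t i) * (1/3)^Suc i) + dig (xs t k) * (1/3)^Suc k"
    by (simp only: sum.lessThan_Suc)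
  ultimately show ?case using Suc.IH by linarith
qed

lemma X_fin: assumes "\<And>n. k \<le> n \<Longrightarrow> A e n = 0"
  shows "X e = (\<Sum>i<k. real_of_int (A e i) * (1/3)^Suc i)"
proof -
  have "(\<lambda>n. real_of_int (A e n) * (1/3::real)^Suc n) sums (\<Sum>i\<in>{..<k}. real_of_int (A e i) * (1/3)^Suc i)"
    by (rule sums_finite) (auto simp: assms)
  then show ?thesis unfolding X_def by (simp add: sums_unique[symmetric])
qed

lemma sing_lem: "S = {} \<or> (\<exists>a. S = {a}) \<Longrightarrow> p \<in> S \<Longrightarrow> S = {p}" by auto

lemma partC:
  assumes t: "t \<in> {0<..<9/8}" and ep: "\<epsilon> > 0"
  shows "\<exists>p \<in> ball (t, 0) \<epsilon>. p \<in> achievement_set (\<lambda>k. (xseq k, yseq k))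
           \<and> connected_component_set (achievement_set (\<lambda>k. (xseq k, yseq k))) p = {p}"
proof -
  let ?E = "achievement_set (\<lambda>k. (xseq k, yseq k))"
  obtain k where k: "(1/3::real)^k < \<epsilon>/5" using real_arch_pow_inv[of "\<epsilon>/5" "1/3"] ep by auto
  define a where "a = (\<lambda>n. dig (xs t n))"
  have a_in: "a n \<in> {0,1,2,9}" for n unfolding a_def by (rule dig_in)
  define e where "e = mk (\<lambda>n. k \<le> n) a"
  have Ae: "real_of_int (A e n) = (if k \<le> n then 0 else a n)" for n
    unfolding e_def by (rule mk_A[OF a_in])
  have Be: "B e n = (if k \<le> n then 1 else 0)" for n
    unfolding e_def by (rule mk_B[OF a_in])
  have "X e = (\<Sum>i<k. real_of_int (A e i) * (1/3)^Suc i)"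
  proof (rule X_fin)
    fix n assume "k \<le> n"
    then have "real_of_int (A e n) = 0" by (simp add: Ae)
    then show "A e n = 0" by simp
  qed
  also have "\<dots> = (\<Sum>i<k. a i * (1/3)^Suc i)" by (rule sum.cong) (auto simp: Ae)
  finally have Xe: "X e = (\<Sum>i<k. a i * (1/3)^Suc i)" .
  have "t - X e = (1/3)^k * xs t k" using xs_expand[of t k] Xe unfolding a_def by linarith
  moreover have "Jx (xs t k)" by (rule xs_J) (use t in \<open>auto simp: Jx_def\<close>)
  ultimately have tx: "\<bar>t - X e\<bar> \<le> (27/8) * (1/3)^k"
    by (auto simp: Jx_def abs_mult intro!: mult_left_mono)
  have Yf: "(\<lambda>n. real_of_int (B e n) * (1/6::real)^Suc n) sums ((1/6)^k * (1/5))"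
  proof -
    have "(\<lambda>i. (1/6)^k * (1 * (1/6::real)^Suc i)) sums ((1/6)^k * (1/5))"
      using sums_mult[OF geo6[of 1], of "(1/6)^k"] by simp
    then have "(\<lambda>i. real_of_int (B e (i + k)) * (1/6::real)^Suc (i+k)) sums ((1/6)^k * (1/5))"
      by (simp add: Be power_add algebra_simps)
    then show ?thesis by (subst (asm) sums_iff_shift) (simp add: Be)
  qed
  then have Ye: "Y e = (1/6)^k * (1/5)" unfolding Y_def by (simp add: sums_unique[symmetric])
  have "(1/6::real)^k \<le> (1/3)^k" by (rule power_mono) auto
  moreover have "(1/3::real)^k \<ge> 0" by simp
  moreover have "\<bar>Y e\<bar> = (1/6::real)^k * (1/5)" unfolding Ye by simp
  ultimately have ye: "\<bar>Y e\<bar> \<le> (1/3)^k" by linarith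
  have "dist (t, 0) (X e, Y e) = sqrt ((t - X e)\<^sup>2 + (Y e)\<^sup>2)"
    by (simp add: dist_Pair_Pair dist_real_def power2_abs)
  also have "\<dots> \<le> \<bar>t - X e\<bar> + \<bar>Y e\<bar>" by (rule sqrt_sum_squares_le_sum_abs)
  also have "\<dots> < \<epsilon>" using tx ye k by linarith
  finally have pin: "(X e, Y e) \<in> ball (t, 0) \<epsilon>" by simp
  let ?p = "(X e, Y e)"
  have pE: "?p \<in> ?E" unfolding E_eq by auto
  let ?C = "connected_component_set ?E ?p"
  have CE: "?C \<subseteq> ?E" by (rule connected_component_subset)
  have sndC: "snd q = Y e" if "q \<in> ?C" for q
  proof (rule conn_vals[of "snd ` ?C"])
    show "connected (snd ` ?C)"
      by (rule connected_continuous_image[OF _ connected_connected_component]) (intro continuous_intros)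
    show "snd ` ?C \<subseteq> {val d |d. dg d}"
    proof
      fix y assume "y \<in> snd ` ?C"
      then obtain q' where "q' \<in> ?C" "y = snd q'" by auto
      then obtain e' where "q' = (X e', Y e')" using CE unfolding E_eq by auto
      then show "y \<in> {val d |d. dg d}" using \<open>y = snd q'\<close> dg_B Y_val by auto
    qed
    show "snd q \<in> snd ` ?C" using that by auto
    show "Y e \<in> snd ` ?C" using pE by (auto intro!: image_eqI[of _ _ ?p] connected_component_refl)
  qed
  define F where "F = (\<lambda>l::int list. ((\<Sum>i<k. real_of_int (l ! i) * (1/3)^Suc i), Y e))"
  have "?C \<subseteq> F ` {l. set l \<subseteq> {0..12} \<and> length l = k}"
  proof
    fix q assume qC: "q \<in> ?C"
    then obtain e' where q: "q = (X e', Y e')" using CE unfolding E_eq by auto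
    have "Y e' = Y e" using sndC[OF qC] q by simp
    then have vv: "val (B e') = val (B e)" by (simp only: Y_val)
    have BB: "B e' n = B e n" for n by (rule val_inj[OF dg_B dg_B vv])
    have "k \<le> n \<Longrightarrow> A e' n = 0" for n
    proof -
      assume "k \<le> n"
      then have "B e' n = 1" using BB[of n] Be[of n] by simp
      then show "A e' n = 0" by (rule B1_A)
    qed
    then have "X e' = (\<Sum>i<k. real_of_int (A e' i) * (1/3)^Suc i)" by (rule X_fin)
    also have "\<dots> = (\<Sum>i<k. real_of_int (map (A e') [0..<k] ! i) * (1/3)^Suc i)"
      by (rule sum.cong) auto
    finally have "q = F (map (A e') [0..<k])" unfolding F_def q using \<open>Y e' = Y e\<close> by simp
    moreover have "set (map (A e') [0..<k]) \<subseteq> {0..12}" using A_rng by auto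
    ultimately show "q \<in> F ` {l. set l \<subseteq> {0..12} \<and> length l = k}"
      by (intro image_eqI[where x="map (A e') [0..<k]"]) simp_all
  qed
  moreover have "finite (F ` {l. set l \<subseteq> {0..12::int} \<and> length l = k})"
    by (intro finite_imageI finite_lists_length_eq) simp
  ultimately have finC: "finite ?C" by (rule finite_subset)
  have pC: "?p \<in> ?C" using pE by (simp add: connected_component_refl)
  have "?C = {} \<or> (\<exists>a. ?C = {a})"
    using connected_finite_iff_sing[OF connected_connected_component[of ?E ?p]] finC by blast
  then have "?C = {?p}" using pC by (rule sing_lem)
  then show ?thesis using pin pE by blast
qed

theorem mainTheorem8:
  defines "E \<equiv> achievement_set (\<lambda>k. (xseq k, yseq k))"
  shows "section0 E = S_set {0, 1, 2, 9} (\<lambda>n. (1/3) ^ n)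
       \<and> interior E = {}
       \<and> (\<forall>t \<in> {0<..<9/8}. \<forall>\<epsilon>>0. \<exists>p \<in> ball (t, 0) \<epsilon>.
             p \<in> E \<and> connected_component_set E p = {p})"
  unfolding E_def by (intro conjI partA partB ballI allI impI partC)

end
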